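(* Let $q:\mathsf D\to\mathbb R$ have sensitivity $\Delta q\in(0,\infty)$, and let $0\le a<b$. If $\Lambda\sim U(a,b)$ (uniform on $[a,b]$), then the Randomized DP Laplace mechanism with reciprocal scale $\Lambda$ is $$\ln\left[\frac{\alpha^2-\beta^2}{2\big((1+\beta)e^{-\beta}-(1+\alpha)e^{-\alpha}\big)}\right]\text{-differentially private},$$ where $\alpha=a\,\Delta q$ and $\beta=b\,\Delta q$.
   Context: Databases form a set $\mathsf D$ with a symmetric adjacency relation; the sensitivity of $q$ is $\Delta q=\sup\{|q(d)-q(d')|:d,d'\text{ adjacent}\}$. A mechanism $M$ is $\epsilon$-DP if $\mathbb P(M(d)\in S)\le e^\epsilon\mathbb P(M(d')\in S)$ for all adjacent $d,d'$ and Borel $S$. The Randomized DP Laplace mechanism with reciprocal-scale distribution $\Lambda$ (a random variable with values in $[0,\infty)$, positive a.s., playing the role of $1/b$ for the Laplace scale) is defined by $\mathcal M_q(d)=q(d)+W$, where conditionally on $\Lambda=\lambda$ the noise $W$ is Laplace with mean $0$ and scale $1/\lambda$, i.e. has density $\frac{\lambda}{2}e^{-\lambda|w|}$; the pair $(\Lambda,W)$ is drawn independently of $d$. *)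

theory Defs
  imports "HOL-Probability.Probability"
begin

text \<open>Sensitivity of a query q w.r.t. an adjacency relation, as an extended real
  (so that the hypothesis that it lies in (0,\<infinity>) is meaningful).\<close>
definition sensitivity :: "('d \<Rightarrow> 'd \<Rightarrow> bool) \<Rightarrow> ('d \<Rightarrow> real) \<Rightarrow> ereal" where
  "sensitivity adj q = (SUP p \<in> {(d, d'). adj d d'}. ereal \<bar>q (fst p) - q (snd p)\<bar>)"

definition differentially_private ::
    "('d \<Rightarrow> 'd \<Rightarrow> bool) \<Rightarrow> ('d \<Rightarrow> real measure) \<Rightarrow> real \<Rightarrow> bool" where
  "differentially_private adj M \<epsilon> \<longleftrightarrow>
     (\<forall>d d'. adj d d' \<longrightarrow>
        (\<forall>S \<in> sets borel. measure (M d) S \<le> exp \<epsilon> * measure (M d') S))"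

definition laplace_density :: "real \<Rightarrow> real \<Rightarrow> real" where
  "laplace_density l w = l / 2 * exp (- l * \<bar>w\<bar>)"

definition rdp_laplace :: "real measure \<Rightarrow> ('d \<Rightarrow> real) \<Rightarrow> 'd \<Rightarrow> real measure" where
  "rdp_laplace L q d =
     L \<bind> (\<lambda>l. density lborel (\<lambda>y. ennreal (laplace_density l (y - q d))))"

end

theory Submission imports Defs begin

definition Gf :: "real \<Rightarrow> real \<Rightarrow> real \<Rightarrow> real" where
  "Gf a b t = integral\<^sup>L lborel (\<lambda>l. l * exp (- l * t) * indicator {a..b} l)"

lemma Gf_integrable: "integrable lborel (\<lambda>l::real. l * exp (- l * (t::real)) * indicator {a..b} l)"
  by (rule borel_integrable_atLeastAtMost[where f="\<lambda>l. l * exp (- l * t)"]) (intro continuous_intros)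
lemma Gf_closed:
  assumes "a \<le> b" "t > 0"
  shows "Gf a b t = ((1 + a*t) * exp (- (a*t)) - (1 + b*t) * exp (- (b*t))) / t\<^sup>2"
proof -
  let ?F = "\<lambda>x. - ((1 + x*t) * exp (- (x*t))) / t\<^sup>2"
  have "integral\<^sup>L lborel (\<lambda>x. indicator {a .. b} x *\<^sub>R (x * exp (- x * t))) = ?F b - ?F a"
  proof (rule integral_FTC_atLeastAtMost[OF assms(1)])
    fix x assume "a \<le> x" "x \<le> b"
    have "(?F has_real_derivative x * exp (- x * t)) (at x)"
      apply (rule derivative_eq_intros refl | simp)+
      using assms apply (simp add: divide_simps power2_eq_square)
      apply (simp add: algebra_simps eval_nat_numeral)
      using assms by simp
    then show "(?F has_vector_derivative x * exp (- x * t)) (at x within {a..b})"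
      by (simp add: has_real_derivative_iff_has_vector_derivative has_vector_derivative_at_within)
  next
    show "continuous_on {a..b} (\<lambda>x. x * exp (- x * t))" by (intro continuous_intros)
  qed
  then show ?thesis unfolding Gf_def
    by (simp add: mult.commute diff_divide_distrib)
qed

lemma Gf_zero:
  assumes "a \<le> b"
  shows "Gf a b 0 = (b\<^sup>2 - a\<^sup>2) / 2"
proof -
  let ?F = "\<lambda>x::real. x\<^sup>2 / 2"
  have "integral\<^sup>L lborel (\<lambda>x. indicator {a .. b} x *\<^sub>R x) = ?F b - ?F a"
  proof (rule integral_FTC_atLeastAtMost[OF assms(1)])
    fix x assume "a \<le> x" "x \<le> b"
    have "(?F has_real_derivative x) (at x)"
      by (rule derivative_eq_intros refl | simp)+
    then show "(?F has_vector_derivative x) (at x within {a..b})"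
      by (simp add: has_real_derivative_iff_has_vector_derivative has_vector_derivative_at_within)
  qed (intro continuous_intros)
  then show ?thesis unfolding Gf_def
    by (simp add: mult.commute diff_divide_distrib)
qed

lemma Gf_mono:
  assumes "0 \<le> a" "s \<le> t"
  shows "Gf a b t \<le> Gf a b s"
  unfolding Gf_def
proof (rule integral_mono[OF Gf_integrable Gf_integrable])
  fix l :: real
  show "l * exp (- l * t) * indicator {a..b} l \<le> l * exp (- l * s) * indicator {a..b} l"
  proof (cases "l \<in> {a..b}")
    case True
    then have "l \<ge> 0" using assms by auto
    moreover have "exp (- l * t) \<le> exp (- l * s)" using \<open>l \<ge> 0\<close> assms(2)
      by (simp add: mult_left_mono)
    ultimately show ?thesis using True by (simp add: mult_left_mono)
  qed simp
qed

lemma Gf_lower: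
  assumes "0 \<le> a" "0 \<le> t"
  shows "exp (- b * t) * Gf a b 0 \<le> Gf a b t"
proof -
  have "exp (- b * t) * Gf a b 0 = integral\<^sup>L lborel (\<lambda>l. exp (- b * t) * (l * exp (- l * 0) * indicator {a..b} l))"
    unfolding Gf_def by simp
  also have "\<dots> \<le> Gf a b t" unfolding Gf_def
  proof (rule integral_mono)
    show "integrable lborel (\<lambda>l. exp (- b * t) * (l * exp (- l * 0) * indicator {a..b} l))"
      using Gf_integrable by (rule integrable_mult_right)
    fix l :: real
    show "exp (- b * t) * (l * exp (- l * 0) * indicator {a..b} l) \<le> l * exp (- l * t) * indicator {a..b} l"
    proof (cases "l \<in> {a..b}")
      case True
      then have "l \<ge> 0" "l \<le> b" using assms by auto
      moreover have "exp (- b * t) \<le> exp (- l * t)" using \<open>l \<le> b\<close> assms(2)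
        by (simp add: mult_right_mono)
      ultimately show ?thesis using True by (simp add: mult_left_mono mult.commute)
    qed simp
  qed (rule Gf_integrable)
  finally show ?thesis .
qed

lemma Gf_cheb:
  assumes "0 \<le> a" "a < b" "0 \<le> t" "0 < D"
  shows "Gf a b D * Gf a b t \<le> Gf a b 0 * Gf a b (t + D)"
proof -
  have "a\<^sup>2 < b\<^sup>2" using assms by (intro power_strict_mono) auto
  then have G0: "Gf a b 0 > 0" using Gf_zero[of a b] assms by simp
  have GD: "Gf a b D > 0"
    using Gf_lower[of a D b] assms G0 by (smt (verit) exp_gt_zero mult_pos_pos)
  define c where "c = Gf a b D / Gf a b 0"
  have c: "c > 0" using G0 GD by (simp add: c_def)
  define l0 where "l0 = - ln c / D"
  have el0: "exp (- l0 * D) = c" using c assms by (simp add: l0_def)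
  define E where "E = exp (- l0 * t)"
  let ?h = "\<lambda>l. l * exp (- l * (t + D)) * indicator {a..b} l - c * (l * exp (- l * t) * indicator {a..b} l)
     - E * (l * exp (- l * D) * indicator {a..b} l) + E * c * (l * exp (- l * 0) * indicator {a..b} l)"
  have "0 \<le> integral\<^sup>L lborel ?h"
  proof (rule integral_nonneg_AE, rule AE_I2)
    fix l :: real
    show "0 \<le> ?h l"
    proof (cases "l \<in> {a..b}")
      case True
      then have l: "l \<ge> 0" using assms by auto
      have "0 \<le> (exp (- l * t) - E) * (exp (- l * D) - c)"
      proof (cases "l \<le> l0")
        case True
        then have "exp (- l * t) \<ge> E" unfolding E_def using assms by (simp add: mult_right_mono)
        moreover have "exp (- l * D) \<ge> c" unfolding el0[symmetric] using assms True by (simp add: mult_right_mono)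
        ultimately show ?thesis by simp
      next
        case False
        then have "exp (- l * t) \<le> E" unfolding E_def using assms by (simp add: mult_right_mono)
        moreover have "exp (- l * D) \<le> c" unfolding el0[symmetric] using assms False by (simp add: mult_right_mono)
        ultimately show ?thesis by (simp add: mult_nonpos_nonpos)
      qed
      then have "0 \<le> l * ((exp (- l * t) - E) * (exp (- l * D) - c))" using l by simp
      also have "\<dots> = ?h l" using True
        by (simp add: algebra_simps exp_add[symmetric])
      finally show ?thesis .
    qed simp
  qed
  also have "integral\<^sup>L lborel ?h = Gf a b (t + D) - c * Gf a b t - E * Gf a b D + E * c * Gf a b 0"
  proof (rule has_bochner_integral_integral_eq)
    show "has_bochner_integral lborel ?h (Gf a b (t + D) - c * Gf a b t - E * Gf a b D + E * c * Gf a b 0)"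
      unfolding Gf_def
      by (intro has_bochner_integral_add has_bochner_integral_diff has_bochner_integral_mult_right
          has_bochner_integral_integrable Gf_integrable)
  qed
  also have "\<dots> = Gf a b (t + D) - c * Gf a b t" using G0 by (simp add: c_def)
  finally have "c * Gf a b t \<le> Gf a b (t + D)" by simp
  then show ?thesis using G0 unfolding c_def by (simp add: field_simps)
qed


lemma lap_meas[measurable]: "(\<lambda>(l, y). laplace_density l (y - c)) \<in> borel_measurable (borel \<Otimes>\<^sub>M borel)"
  unfolding laplace_density_def by measurable

lemma lap_le_exp:
  assumes "0 < l"
  shows "laplace_density l w \<le> exponential_density l w / 2 + exponential_density l (- w) / 2"
  using assms unfolding laplace_density_def exponential_density_def
  by (auto simp: abs_if mult.commute)

lemma int_exp_dens:
  assumes "0 < l"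
  shows "(\<integral>\<^sup>+ y. ennreal (exponential_density l y) \<partial>lborel) = 1"
proof -
  interpret prob_space "density lborel (exponential_density l)"
    using prob_space_exponential_density[OF assms] .
  have "emeasure (density lborel (exponential_density l)) UNIV = 1"
    using emeasure_space_1 by simp
  then show ?thesis by (simp add: emeasure_density)
qed

lemma lap_total:
  "(\<integral>\<^sup>+ y. ennreal (laplace_density l (y - c)) \<partial>lborel) \<le> 1"
proof (cases "0 < l")
  case False
  then have "\<And>y. ennreal (laplace_density l (y - c)) = 0"
    unfolding laplace_density_def by (simp add: ennreal_eq_0_iff mult_nonpos_nonneg)
  then show ?thesis by simp
next
  case True
  have e1: "(\<integral>\<^sup>+ y. ennreal (exponential_density l (y - c)) \<partial>lborel) = 1"
    using nn_integral_real_affine[of "\<lambda>y. ennreal (exponential_density l y)" 1 "- c"] int_exp_dens[OF True]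
    by simp
  have e2: "(\<integral>\<^sup>+ y. ennreal (exponential_density l (- (y - c))) \<partial>lborel) = 1"
    using nn_integral_real_affine[of "\<lambda>y. ennreal (exponential_density l y)" "-1" "c"] int_exp_dens[OF True]
    by simp
  have "(\<integral>\<^sup>+ y. ennreal (laplace_density l (y - c)) \<partial>lborel)
      \<le> (\<integral>\<^sup>+ y. ennreal (exponential_density l (y - c)) / 2 + ennreal (exponential_density l (- (y - c))) / 2 \<partial>lborel)"
  proof (rule nn_integral_mono)
    fix y
    have n1: "0 \<le> exponential_density l (y - c)" "0 \<le> exponential_density l (- (y - c))"
      using exponential_density_nonneg[OF True] by auto
    have "ennreal (laplace_density l (y - c)) \<le> ennreal (exponential_density l (y - c) / 2 + exponential_density l (- (y - c)) / 2)"
      by (rule ennreal_leI) (rule lap_le_exp[OF True])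
    also have "\<dots> = ennreal (exponential_density l (y - c) / 2) + ennreal (exponential_density l (- (y - c)) / 2)"
      using n1 by (intro ennreal_plus) auto
    also have "\<dots> = ennreal (exponential_density l (y - c)) / 2 + ennreal (exponential_density l (- (y - c))) / 2"
      using n1 by (simp add: divide_ennreal[symmetric])
    finally show "ennreal (laplace_density l (y - c)) \<le> ennreal (exponential_density l (y - c)) / 2 + ennreal (exponential_density l (- (y - c))) / 2" .
  qed
  also have "\<dots> = 1 / 2 + 1 / 2"
    by (subst nn_integral_add) (auto simp: nn_integral_divide e1 e2[simplified])
  also have "\<dots> = (1::ennreal)"
  proof -
    have h: "(1::ennreal)/2 = ennreal (1/2)" using divide_ennreal[of 1 2] by simp
    have "ennreal (1/2) + ennreal(1/2) = ennreal (1/2 + 1/2)" by (rule ennreal_plus[symmetric]) auto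
    then show ?thesis unfolding h by simp
  qed
  finally show ?thesis .
qed

lemma lap_meas1[measurable]: "(\<lambda>y. laplace_density l (y - c)) \<in> borel_measurable borel"
  unfolding laplace_density_def by measurable

lemma K_meas:
  "(\<lambda>l. density lborel (\<lambda>y. ennreal (laplace_density l (y - c)))) \<in> measurable borel (subprob_algebra lborel)"
proof (rule measurable_subprob_algebra)
  fix l :: real
  show "subprob_space (density lborel (\<lambda>y. ennreal (laplace_density l (y - c))))"
  proof (rule subprob_spaceI)
    show "emeasure (density lborel (\<lambda>y. ennreal (laplace_density l (y - c))))
        (space (density lborel (\<lambda>y. ennreal (laplace_density l (y - c))))) \<le> 1"
      using lap_total[of l c] by (simp add: emeasure_density)
  qed simp
  show "sets (density lborel (\<lambda>y. ennreal (laplace_density l (y - c)))) = sets lborel" by simp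
next
  fix A :: "real set" assume A: "A \<in> sets lborel"
  have "(\<lambda>l. \<integral>\<^sup>+ y. ennreal (laplace_density l (y - c)) * indicator A y \<partial>lborel) \<in> borel_measurable borel"
  proof (rule lborel.borel_measurable_nn_integral)
    have [measurable]: "A \<in> sets borel" using A by simp
    show "(\<lambda>(l, y). ennreal (laplace_density l (y - c)) * indicator A y) \<in> borel_measurable (borel \<Otimes>\<^sub>M lborel)"
      unfolding laplace_density_def by measurable
  qed
  then show "(\<lambda>l. emeasure (density lborel (\<lambda>y. ennreal (laplace_density l (y - c)))) A) \<in> borel_measurable borel"
    using A by (simp add: emeasure_density)
qed


lemma M_emeasure:
  assumes "a < b" and S: "S \<in> sets borel"
  shows "emeasure (rdp_laplace (uniform_measure lborel {a..b}) q d) S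
     = (\<integral>\<^sup>+ y. (\<integral>\<^sup>+ l. ennreal (laplace_density l (y - q d)) * indicator {a..b} l \<partial>lborel) * indicator S y \<partial>lborel) / ennreal (b - a)"
proof -
  let ?U = "uniform_measure lborel {a..b}"
  let ?K = "\<lambda>l. density lborel (\<lambda>y. ennreal (laplace_density l (y - q d)))"
  have [measurable]: "S \<in> sets borel" by fact
  have "measurable ?U (subprob_algebra lborel) = measurable borel (subprob_algebra lborel)"
    by (intro measurable_cong_sets) auto
  then have Km: "?K \<in> measurable ?U (subprob_algebra lborel)" using K_meas by simp
  have "emeasure (rdp_laplace ?U q d) S = (\<integral>\<^sup>+ l. emeasure (?K l) S \<partial>?U)"
    unfolding rdp_laplace_def using Km S by (intro emeasure_bind) auto
  also have "\<dots> = (\<integral>\<^sup>+ l. (\<integral>\<^sup>+ y. ennreal (laplace_density l (y - q d)) * indicator S y \<partial>lborel) \<partial>?U)"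
    using S by (simp add: emeasure_density)
  also have "\<dots> = (\<integral>\<^sup>+ l. (\<integral>\<^sup>+ y. ennreal (laplace_density l (y - q d)) * indicator S y \<partial>lborel) * indicator {a..b} l \<partial>lborel) / emeasure lborel {a..b}"
    by (rule nn_integral_uniform_measure) (auto simp: laplace_density_def)
  also have "emeasure lborel {a..b} = ennreal (b - a)" using assms by simp
  also have "(\<integral>\<^sup>+ l. (\<integral>\<^sup>+ y. ennreal (laplace_density l (y - q d)) * indicator S y \<partial>lborel) * indicator {a..b} l \<partial>lborel)
      = (\<integral>\<^sup>+ l. (\<integral>\<^sup>+ y. ennreal (laplace_density l (y - q d)) * indicator S y * indicator {a..b} l \<partial>lborel) \<partial>lborel)"
    by (subst nn_integral_multc) (auto simp: laplace_density_def)
  also have "\<dots> = (\<integral>\<^sup>+ y. (\<integral>\<^sup>+ l. ennreal (laplace_density l (y - q d)) * indicator S y * indicator {a..b} l \<partial>lborel) \<partial>lborel)"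
    by (rule lborel_pair.Fubini'[symmetric]) (auto simp: laplace_density_def)
  also have "\<dots> = (\<integral>\<^sup>+ y. (\<integral>\<^sup>+ l. ennreal (laplace_density l (y - q d)) * indicator {a..b} l \<partial>lborel) * indicator S y \<partial>lborel)"
    by (intro nn_integral_cong, subst nn_integral_multc[symmetric]) (auto simp: laplace_density_def mult_ac)
  finally show ?thesis .
qed


lemma Phi_eq:
  assumes "0 \<le> a"
  shows "(\<integral>\<^sup>+ l. ennreal (laplace_density l w) * indicator {a..b} l \<partial>lborel) = ennreal (Gf a b \<bar>w\<bar> / 2)"
proof -
  have "(\<integral>\<^sup>+ l. ennreal (laplace_density l w) * indicator {a..b} l \<partial>lborel)
      = (\<integral>\<^sup>+ l. ennreal (1/2 * (l * exp (- l * \<bar>w\<bar>) * indicator {a..b} l)) \<partial>lborel)"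
    by (intro nn_integral_cong) (auto simp: laplace_density_def split: split_indicator)
  also have "\<dots> = ennreal (integral\<^sup>L lborel (\<lambda>l. 1/2 * (l * exp (- l * \<bar>w\<bar>) * indicator {a..b} l)))"
    using assms by (intro nn_integral_eq_integral integrable_mult_right Gf_integrable AE_I2)
      (auto split: split_indicator)
  also have "\<dots> = ennreal (Gf a b \<bar>w\<bar> / 2)"
    unfolding Gf_def by simp
  finally show ?thesis .
qed


lemma Gf_pos:
  assumes "0 \<le> a" "a < b" "0 \<le> t"
  shows "Gf a b t > 0"
proof -
  have "a\<^sup>2 < b\<^sup>2" using assms by (intro power_strict_mono) auto
  then have G0: "Gf a b 0 > 0" using Gf_zero[of a b] assms by simp
  show ?thesis using Gf_lower[of a t b] assms G0 by (smt (verit) exp_gt_zero mult_pos_pos)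
qed

lemma Km_U:
  "(\<lambda>l. density lborel (\<lambda>y. ennreal (laplace_density l (y - c)))) \<in> measurable (uniform_measure lborel {a..b}) (subprob_algebra lborel)"
proof -
  have "measurable (uniform_measure lborel {a..b}) (subprob_algebra lborel) = measurable borel (subprob_algebra lborel)"
    by (intro measurable_cong_sets) auto
  then show ?thesis using K_meas by simp
qed

lemma M_finite:
  assumes "a < b"
  shows "emeasure (rdp_laplace (uniform_measure lborel {a..b}) q d) S < \<top>"
proof -
  have "prob_space (uniform_measure lborel {a..b})"
    using assms by (intro prob_space_uniform_measure) auto
  then have "subprob_space (rdp_laplace (uniform_measure lborel {a..b}) q d)"
    unfolding rdp_laplace_def
    by (intro subprob_space_bind[OF _ Km_U]) (simp add: prob_space_imp_subprob_space)
  from subprob_space.emeasure_subprob_space_less_top[OF this, of S] show ?thesis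
    by (simp add: less_top)
qed

lemma pointwise:
  assumes "0 \<le> a" "a < b" "0 < D" "\<bar>u - v\<bar> \<le> D"
  shows "ennreal (Gf a b \<bar>y - u\<bar> / 2) \<le> ennreal (Gf a b 0 / Gf a b D) * ennreal (Gf a b \<bar>y - v\<bar> / 2)"
proof -
  let ?t1 = "\<bar>y - u\<bar>" and ?t2 = "\<bar>y - v\<bar>"
  have GD: "Gf a b D > 0" using Gf_pos assms by simp
  have G0: "Gf a b 0 > 0" using Gf_pos assms by simp
  have "Gf a b (?t1 + D) \<le> Gf a b ?t2"
    using assms by (intro Gf_mono) auto
  moreover have "Gf a b D * Gf a b ?t1 \<le> Gf a b 0 * Gf a b (?t1 + D)"
    using assms by (intro Gf_cheb) auto
  ultimately have "Gf a b D * Gf a b ?t1 \<le> Gf a b 0 * Gf a b ?t2"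
    using G0 by (smt (verit) mult_left_mono)
  then have r: "Gf a b ?t1 / 2 \<le> Gf a b 0 / Gf a b D * (Gf a b ?t2 / 2)"
    using GD by (simp add: field_simps)
  have "ennreal (Gf a b ?t1 / 2) \<le> ennreal (Gf a b 0 / Gf a b D * (Gf a b ?t2 / 2))"
    using r by (rule ennreal_leI)
  also have "\<dots> = ennreal (Gf a b 0 / Gf a b D) * ennreal (Gf a b ?t2 / 2)"
    using G0 GD Gf_pos[of a b ?t2] assms by (intro ennreal_mult) auto
  finally show ?thesis .
qed


theorem mainTheorem11:
  fixes adj :: "'d \<Rightarrow> 'd \<Rightarrow> bool" and q :: "'d \<Rightarrow> real" and a b :: real
  assumes "symp adj"
    and "0 < sensitivity adj q" and "sensitivity adj q < \<infinity>"
    and "0 \<le> a" and "a < b"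
  defines "\<alpha> \<equiv> a * real_of_ereal (sensitivity adj q)"
    and "\<beta> \<equiv> b * real_of_ereal (sensitivity adj q)"
  shows "differentially_private adj (rdp_laplace (uniform_measure lborel {a..b}) q)
           (ln ((\<alpha>\<^sup>2 - \<beta>\<^sup>2) / (2 * ((1 + \<beta>) * exp (- \<beta>) - (1 + \<alpha>) * exp (- \<alpha>)))))"
proof -
  define D where "D = real_of_ereal (sensitivity adj q)"
  have sD: "sensitivity adj q = ereal D"
    using assms(2,3) unfolding D_def by (cases "sensitivity adj q") auto
  have D: "0 < D" using assms(2) sD by simp
  have Dle: "\<bar>q d - q d'\<bar> \<le> D" if "adj d d'" for d d'
  proof -
    have "ereal \<bar>q d - q d'\<bar> \<le> sensitivity adj q"
      unfolding sensitivity_def using that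
      by (intro SUP_upper2[where i="(d, d')"]) auto
    then show ?thesis using sD by simp
  qed
  define C where "C = Gf a b 0 / Gf a b D"
  have GD: "Gf a b D > 0" using Gf_pos assms D by simp
  have G0: "Gf a b 0 > 0" using Gf_pos assms D by simp
  have C: "C > 0" using GD G0 by (simp add: C_def)
  have expr: "(\<alpha>\<^sup>2 - \<beta>\<^sup>2) / (2 * ((1 + \<beta>) * exp (- \<beta>) - (1 + \<alpha>) * exp (- \<alpha>))) = C"
  proof -
    have cl: "Gf a b D = ((1 + a*D) * exp (- (a*D)) - (1 + b*D) * exp (- (b*D))) / D\<^sup>2"
      using Gf_closed[of a b D] assms D by simp
    have nz: "(1 + a*D) * exp (- (a*D)) - (1 + b*D) * exp (- (b*D)) \<noteq> 0"
      using GD cl by auto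
    show ?thesis
      unfolding C_def cl Gf_zero[OF less_imp_le[OF assms(5)]] \<alpha>_def \<beta>_def D_def[symmetric]
      using D nz by (simp add: field_simps power2_eq_square)
  qed
  show ?thesis
    unfolding differentially_private_def expr
  proof (intro allI impI ballI)
    fix d d' and S :: "real set"
    assume adj: "adj d d'" and S: "S \<in> sets borel"
    let ?M = "rdp_laplace (uniform_measure lborel {a..b}) q"
    let ?Phi = "\<lambda>e y. (\<integral>\<^sup>+ l. ennreal (laplace_density l (y - q e)) * indicator {a..b} l \<partial>lborel)"
    have [measurable]: "S \<in> sets borel" by fact
    have "emeasure (?M d) S = (\<integral>\<^sup>+ y. ?Phi d y * indicator S y \<partial>lborel) / ennreal (b - a)"
      using M_emeasure[OF assms(5) S, of q d] by simp
    also have "\<dots> \<le> (\<integral>\<^sup>+ y. ennreal C * (?Phi d' y * indicator S y) \<partial>lborel) / ennreal (b - a)"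
      apply (intro divide_right_mono_ennreal nn_integral_mono)
      unfolding Phi_eq[OF assms(4)]
      using pointwise[OF assms(4,5) D Dle[OF adj]] unfolding C_def
      by (auto simp: mult.assoc split: split_indicator)
    also have "\<dots> = ennreal C * ((\<integral>\<^sup>+ y. ?Phi d' y * indicator S y \<partial>lborel) / ennreal (b - a))"
      by (subst nn_integral_cmult) (auto simp: ennreal_times_divide laplace_density_def)
    also have "\<dots> = ennreal C * emeasure (?M d') S"
      using M_emeasure[OF assms(5) S, of q d'] by simp
    finally have le: "emeasure (?M d) S \<le> ennreal C * emeasure (?M d') S" .
    have "measure (?M d) S = enn2real (emeasure (?M d) S)" by (simp add: measure_def)
    also have "\<dots> \<le> enn2real (ennreal C * emeasure (?M d') S)"
      using le M_finite[OF assms(5), of q d' S] by (intro enn2real_mono) (auto simp: ennreal_mult_less_top)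
    also have "\<dots> = C * measure (?M d') S"
      using C by (simp add: enn2real_mult measure_def)
    finally show "measure (?M d) S \<le> exp (ln C) * measure (?M d') S"
      using C by simp
  qed
qed

end
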